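(* Let $1\le r\le n$, let $d_1,\dots,d_{n-r}$ be positive integers, let $J=(x_1^{d_1},\dots,x_{n-r}^{d_{n-r}})\subseteq S$, and let $D\ge l$. If $P$ is a $D$-exact cone decomposition of $N_{JF}$ with Macaulay constants $b_0,\dots,b_{n+1}$, then \[ b_r=d_1\cdots d_{n-r}\,m+D. \]
   Context: Standing notation. $S=\mathbb{K}[x_1,\dots,x_n]$ is standard graded, and $F=Se_1\oplus\cdots\oplus Se_m$ is a graded free module with $\deg(e_j)\ge0$ integers; $l=\max_j\deg(e_j)$. Monomials of $F$ are $x^\alpha e_j$ of degree $|\alpha|+\deg(e_j)$. $N_{JF}$ is the $\mathbb{K}$-span of the monomials of $F$ not in $JF$. Cones. For a homogeneous $h\in F$ and $u\subseteq\{x_1,\dots,x_n\}$, the cone $C(h,u)=h\,\mathbb{K}[u]$ has degree $\deg h$ and dimension $|u|$. A cone decomposition of a subspace $T\subseteq F$ is a finite set $P$ of cones with $T=\bigoplus_{C\in P}C$; $P^+=\{C\in P:\dim C>0\}$. $P$ is $q$-standard if (1) no $C\in P^+$ has $\deg C<q$, and (2) for every $C\in P^+$ and every integer $d$ with $q\le d\le\deg C$ there is $C'\in P$ with $\deg C'=d$ and $\dim C'\ge\dim C$. $P$ is $q$-exact if it is $q$-standard and distinct cones of $P^+$ have distinct degrees. The Macaulay constants of a $q$-exact $P$ are $b_k=\max(\{q\}\cup\{1+\deg C:C\in P,\ \dim C\ge k\})$ for $k=0,\dots,n+1$. *)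

theory Defs
  imports Main
begin

text \<open>Monomials x^alpha e_j of F are pairs (alpha, j); variables are x_1..x_n
  (indices 1..n), basis vectors e_1..e_m (indices 1..m), deg e_j = delta j.\<close>

type_synonym mon = "(nat \<Rightarrow> nat) \<times> nat"

definition valid_mon :: "nat \<Rightarrow> nat \<Rightarrow> mon \<Rightarrow> bool" where
  "valid_mon n m x \<longleftrightarrow> (\<forall>i. fst x i \<noteq> 0 \<longrightarrow> i \<in> {1..n}) \<and> snd x \<in> {1..m}"

definition mdeg :: "(nat \<Rightarrow> nat) \<Rightarrow> nat \<Rightarrow> mon \<Rightarrow> nat" where
  "mdeg delta n x = (\<Sum>i=1..n. fst x i) + delta (snd x)"

definition in_F :: "nat \<Rightarrow> nat \<Rightarrow> (mon \<Rightarrow> 'k::field) \<Rightarrow> bool" where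
  "in_F n m f \<longleftrightarrow> finite {x. f x \<noteq> 0} \<and> (\<forall>x. f x \<noteq> 0 \<longrightarrow> valid_mon n m x)"

definition homog :: "nat \<Rightarrow> nat \<Rightarrow> (nat \<Rightarrow> nat) \<Rightarrow> nat \<Rightarrow> (mon \<Rightarrow> 'k::field) \<Rightarrow> bool" where
  "homog n m delta d f \<longleftrightarrow> in_F n m f \<and> (\<forall>x. f x \<noteq> 0 \<longrightarrow> mdeg delta n x = d)"

definition hdeg :: "nat \<Rightarrow> (nat \<Rightarrow> nat) \<Rightarrow> (mon \<Rightarrow> 'k::field) \<Rightarrow> nat" where
  "hdeg n delta f = (THE d. \<forall>x. f x \<noteq> 0 \<longrightarrow> mdeg delta n x = d)"

definition kspan :: "('a \<Rightarrow> 'k::field) set \<Rightarrow> ('a \<Rightarrow> 'k) set" where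
  "kspan S = {f. \<exists>A c. finite A \<and> A \<subseteq> S \<and> f = (\<lambda>x. \<Sum>a\<in>A. c a * a x)}"

text \<open>Multiplication by the monomial x^beta.\<close>
definition shift :: "(nat \<Rightarrow> nat) \<Rightarrow> (mon \<Rightarrow> 'k::field) \<Rightarrow> mon \<Rightarrow> 'k" where
  "shift beta f = (\<lambda>(alpha, j). if (\<forall>i. beta i \<le> alpha i) then f (alpha - beta, j) else 0)"

text \<open>A cone C(h,u) is represented by the pair (h,u); its underlying subspace is h K[u].\<close>
definition cone_set :: "(mon \<Rightarrow> 'k::field) \<times> nat set \<Rightarrow> (mon \<Rightarrow> 'k) set" where
  "cone_set C = kspan {shift beta (fst C) | beta. \<forall>i. beta i \<noteq> 0 \<longrightarrow> i \<in> snd C}"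

definition valid_cone :: "nat \<Rightarrow> nat \<Rightarrow> (nat \<Rightarrow> nat) \<Rightarrow> (mon \<Rightarrow> 'k::field) \<times> nat set \<Rightarrow> bool" where
  "valid_cone n m delta C \<longleftrightarrow> snd C \<subseteq> {1..n} \<and> fst C \<noteq> (\<lambda>_. 0) \<and> (\<exists>d. homog n m delta d (fst C))"

definition cdeg :: "nat \<Rightarrow> (nat \<Rightarrow> nat) \<Rightarrow> (mon \<Rightarrow> 'k::field) \<times> nat set \<Rightarrow> nat" where
  "cdeg n delta C = hdeg n delta (fst C)"

definition cdim :: "(mon \<Rightarrow> 'k::field) \<times> nat set \<Rightarrow> nat" where
  "cdim C = card (snd C)"

definition cone_decomp :: "nat \<Rightarrow> nat \<Rightarrow> (nat \<Rightarrow> nat) \<Rightarrow> (mon \<Rightarrow> 'k::field) set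
    \<Rightarrow> ((mon \<Rightarrow> 'k) \<times> nat set) set \<Rightarrow> bool" where
  "cone_decomp n m delta T P \<longleftrightarrow> finite P \<and> (\<forall>C\<in>P. valid_cone n m delta C) \<and>
     T = {(\<lambda>x. \<Sum>C\<in>P. g C x) | g. \<forall>C\<in>P. g C \<in> cone_set C} \<and>
     (\<forall>g. (\<forall>C\<in>P. g C \<in> cone_set C) \<longrightarrow> (\<lambda>x. \<Sum>C\<in>P. g C x) = (\<lambda>_. 0)
          \<longrightarrow> (\<forall>C\<in>P. g C = (\<lambda>_. 0)))"

definition q_standard :: "nat \<Rightarrow> (nat \<Rightarrow> nat) \<Rightarrow> nat \<Rightarrow> ((mon \<Rightarrow> 'k::field) \<times> nat set) set \<Rightarrow> bool" where
  "q_standard n delta q P \<longleftrightarrow>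
     (\<forall>C\<in>P. cdim C > 0 \<longrightarrow> q \<le> cdeg n delta C) \<and>
     (\<forall>C\<in>P. cdim C > 0 \<longrightarrow> (\<forall>d. q \<le> d \<and> d \<le> cdeg n delta C \<longrightarrow>
        (\<exists>C'\<in>P. cdeg n delta C' = d \<and> cdim C' \<ge> cdim C)))"

definition q_exact :: "nat \<Rightarrow> (nat \<Rightarrow> nat) \<Rightarrow> nat \<Rightarrow> ((mon \<Rightarrow> 'k::field) \<times> nat set) set \<Rightarrow> bool" where
  "q_exact n delta q P \<longleftrightarrow> q_standard n delta q P \<and>
     (\<forall>C\<in>P. \<forall>C'\<in>P. cdim C > 0 \<and> cdim C' > 0 \<and> C \<noteq> C' \<longrightarrow> cdeg n delta C \<noteq> cdeg n delta C')"

definition macaulay_const :: "nat \<Rightarrow> (nat \<Rightarrow> nat) \<Rightarrow> nat \<Rightarrow> ((mon \<Rightarrow> 'k::field) \<times> nat set) set \<Rightarrow> nat \<Rightarrow> nat" where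
  "macaulay_const n delta q P k = Max ({q} \<union> {1 + cdeg n delta C | C. C \<in> P \<and> cdim C \<ge> k})"

text \<open>N_{JF} for J = (x_1^{d_1},...,x_{n-r}^{d_{n-r}}): span of monomials of F not in JF.\<close>
definition N_JF :: "nat \<Rightarrow> nat \<Rightarrow> (nat \<Rightarrow> nat) \<Rightarrow> nat \<Rightarrow> (mon \<Rightarrow> 'k::field) set" where
  "N_JF n m d r = kspan {(\<lambda>y. if y = x then 1 else 0) | x.
      valid_mon n m x \<and> (\<forall>i\<in>{1..n-r}. fst x i < d i)}"

end

theory Submission
  imports Defs "HOL-Library.Function_Algebras" "HOL.Vector_Spaces" "HOL-Library.FuncSet"
begin

definition vsum :: "nat \<Rightarrow> (nat \<Rightarrow> nat) \<Rightarrow> nat" where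
  "vsum n b = (\<Sum>i=1..n. b i)"

definition supp_in :: "nat set \<Rightarrow> (nat \<Rightarrow> nat) \<Rightarrow> bool" where
  "supp_in u b \<longleftrightarrow> (\<forall>i. b i \<noteq> 0 \<longrightarrow> i \<in> u)"

definition Bs :: "nat \<Rightarrow> nat set \<Rightarrow> nat \<Rightarrow> (nat \<Rightarrow> nat) set" where
  "Bs n u s = {b. supp_in u b \<and> vsum n b = s}"

definition cnt :: "nat \<Rightarrow> nat set \<Rightarrow> nat \<Rightarrow> nat" where
  "cnt n u s = card (Bs n u s)"

lemma vsum_ge: "i \<in> {1..n} \<Longrightarrow> b i \<le> vsum n b"
  unfolding vsum_def by (rule member_le_sum) auto

lemma finite_Bs:
  assumes "u \<subseteq> {1..n}"
  shows "finite (Bs n u s)"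
proof -
  have fu: "finite u" using assms finite_subset by blast
  have "Bs n u s \<subseteq> {f. \<forall>x. (x \<in> u \<longrightarrow> f x \<in> {..s}) \<and> (x \<notin> u \<longrightarrow> f x = 0)}"
    using assms by (auto simp: Bs_def supp_in_def intro!: vsum_ge)
  moreover have "finite {f. \<forall>x. (x \<in> u \<longrightarrow> f x \<in> {..s}) \<and> (x \<notin> u \<longrightarrow> f x = (0::nat))}"
    by (rule finite_set_of_finite_funs) (use fu in auto)
  ultimately show ?thesis by (rule finite_subset)
qed

lemma vsum_zero_iff:
  assumes "supp_in u b" "u \<subseteq> {1..n}"
  shows "vsum n b = 0 \<longleftrightarrow> b = (\<lambda>_. 0)"
proof
  assume "vsum n b = 0"
  then have "\<forall>i\<in>{1..n}. b i = 0" unfolding vsum_def by simp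
  then show "b = (\<lambda>_. 0)" using assms by (auto simp: supp_in_def)
qed (simp add: vsum_def)

lemma cnt_zero:
  assumes "u \<subseteq> {1..n}"
  shows "cnt n u 0 = 1"
proof -
  have "Bs n u 0 = {\<lambda>_. 0}"
    using vsum_zero_iff[OF _ assms] by (auto simp: Bs_def supp_in_def vsum_def)
  then show ?thesis by (simp add: cnt_def)
qed

lemma cnt_empty: "cnt n {} s = (if s = 0 then 1 else 0)"
proof -
  have "Bs n {} s = (if s = 0 then {\<lambda>_. 0} else {})"
    by (auto simp: Bs_def supp_in_def vsum_def fun_eq_iff)
  then show ?thesis by (simp add: cnt_def)
qed

lemma vsum_add: "vsum n (\<lambda>i. a i + b i) = vsum n a + vsum n b"
  by (simp add: vsum_def sum.distrib)

lemma cnt_step: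
  assumes "u \<subseteq> {1..n}" "x \<in> u" "s \<ge> 1"
  shows "cnt n u s = cnt n u (s - 1) + cnt n (u - {x}) s"
proof -
  define ex where "ex = (\<lambda>i::nat. if i = x then 1 else (0::nat))"
  have vex: "vsum n ex = 1" using assms unfolding vsum_def ex_def
    by (simp add: sum.delta subset_iff)
  have split: "Bs n u s = Bs n (u - {x}) s \<union> {b \<in> Bs n u s. b x \<noteq> 0}"
    by (auto simp: Bs_def supp_in_def)
  have disj: "Bs n (u - {x}) s \<inter> {b \<in> Bs n u s. b x \<noteq> 0} = {}"
    by (auto simp: Bs_def supp_in_def)
  have img: "{b \<in> Bs n u s. b x \<noteq> 0} = (\<lambda>b i. b i + ex i) ` Bs n u (s - 1)"
  proof (rule set_eqI, rule iffI)
    fix b assume b: "b \<in> {b \<in> Bs n u s. b x \<noteq> 0}"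
    define b' where "b' = (\<lambda>i. b i - ex i)"
    have "b = (\<lambda>i. b' i + ex i)" using b by (auto simp: b'_def ex_def fun_eq_iff)
    moreover have "b' \<in> Bs n u (s - 1)"
    proof -
      have "supp_in u b'" using b assms by (auto simp: b'_def Bs_def supp_in_def ex_def)
      moreover have "vsum n b' + 1 = s"
        using vsum_add[of n b' ex] vex \<open>b = _\<close> b by (simp add: Bs_def)
      ultimately show ?thesis by (auto simp: Bs_def)
    qed
    ultimately show "b \<in> (\<lambda>b i. b i + ex i) ` Bs n u (s - 1)" by blast
  next
    fix b assume "b \<in> (\<lambda>b i. b i + ex i) ` Bs n u (s - 1)"
    then obtain b' where b': "b' \<in> Bs n u (s - 1)" "b = (\<lambda>i. b' i + ex i)" by blast
    then show "b \<in> {b \<in> Bs n u s. b x \<noteq> 0}"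
      using assms vsum_add[of n b' ex] vex
      by (auto simp: Bs_def supp_in_def ex_def split: if_splits)
  qed
  have inj: "inj_on (\<lambda>b i. b i + ex i) (Bs n u (s - 1))"
    by (auto simp: inj_on_def fun_eq_iff)
  have f1: "finite (Bs n (u - {x}) s)" using assms by (intro finite_Bs) auto
  have f2: "finite {b \<in> Bs n u s. b x \<noteq> 0}" using finite_Bs[OF assms(1)] by auto
  have "cnt n u s = card (Bs n (u - {x}) s) + card {b \<in> Bs n u s. b x \<noteq> 0}"
    unfolding cnt_def by (subst split, rule card_Un_disjoint[OF f1 f2 disj])
  also have "card {b \<in> Bs n u s. b x \<noteq> 0} = cnt n u (s - 1)"
    unfolding img cnt_def by (rule card_image[OF inj])
  finally show ?thesis by (simp add: cnt_def)
qed


definition gz :: "nat \<Rightarrow> nat set \<Rightarrow> int \<Rightarrow> int" where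
  "gz n u t = (if t < 0 then 0 else int (cnt n u (nat t)))"

definition dlt :: "(int \<Rightarrow> int) \<Rightarrow> int \<Rightarrow> int" where
  "dlt f t = f t - f (t - 1)"

lemma gz_step:
  assumes "u \<subseteq> {1..n}" "x \<in> u"
  shows "dlt (gz n u) = gz n (u - {x})"
proof
  fix t :: int
  show "dlt (gz n u) t = gz n (u - {x}) t"
  proof (cases "t < 0")
    case True then show ?thesis by (simp add: dlt_def gz_def)
  next
    case False
    show ?thesis
    proof (cases "t = 0")
      case True
      then show ?thesis using assms cnt_zero[of u n] cnt_zero[of "u - {x}" n]
        by (auto simp: dlt_def gz_def)
    next
      case False
      with \<open>\<not> t < 0\<close> have "t \<ge> 1" by simp
      then have "nat (t - 1) = nat t - 1" "nat t \<ge> 1" by auto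
      then show ?thesis using cnt_step[OF assms, of "nat t"] \<open>t \<ge> 1\<close>
        by (simp add: dlt_def gz_def)
    qed
  qed
qed

lemma gz_empty: "gz n {} t = (if t = 0 then 1 else 0)"
  by (auto simp: gz_def cnt_empty)

lemma dlt_pow_gz:
  assumes "u \<subseteq> {1..n}" "j \<le> card u"
  shows "\<exists>u'. u' \<subseteq> u \<and> card u' = card u - j \<and> (dlt ^^ j) (gz n u) = gz n u'"
  using assms(2)
proof (induction j)
  case 0 then show ?case by auto
next
  case (Suc j)
  then obtain u' where u': "u' \<subseteq> u" "card u' = card u - j" "(dlt ^^ j) (gz n u) = gz n u'"
    by auto
  have "finite u" using assms(1) finite_subset by blast
  have "card u' \<ge> 1" using Suc.prems u' by simp
  then have "u' \<noteq> {}" by auto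
  then obtain x where x: "x \<in> u'" by blast
  have fu': "finite u'" using \<open>finite u\<close> u' finite_subset by blast
  have "(dlt ^^ Suc j) (gz n u) = gz n (u' - {x})"
    using gz_step[of u' n x] u' assms(1) x by auto
  moreover have "card (u' - {x}) = card u - Suc j" using x fu' u' by simp
  ultimately show ?case using u' by blast
qed

lemma dlt_pow_supp:
  assumes "\<forall>t. (t < 0 \<or> t > a) \<longrightarrow> f t = 0"
  shows "\<forall>t. (t < 0 \<or> t > a + int i) \<longrightarrow> (dlt ^^ i) f t = 0"
proof (induction i)
  case 0 then show ?case using assms by simp
next
  case (Suc i)
  then show ?case by (auto simp: dlt_def)
qed

lemma dlt_pow_small:
  assumes "u \<subseteq> {1..n}" "card u \<le> j" "t > int j"
  shows "(dlt ^^ j) (gz n u) t = 0"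
proof -
  obtain u' where u': "u' \<subseteq> u" "card u' = 0" "(dlt ^^ card u) (gz n u) = gz n u'"
    using dlt_pow_gz[OF assms(1), of "card u"] by auto
  have "finite u" using assms(1) finite_subset by blast
  then have "finite u'" using u' finite_subset by blast
  then have "u' = {}" using u' by simp
  have s0: "\<forall>t. (t < 0 \<or> t > 0) \<longrightarrow> (dlt ^^ card u) (gz n u) t = 0"
    using u' \<open>u' = {}\<close> by (simp add: gz_empty)
  have "(dlt ^^ j) (gz n u) = (dlt ^^ (j - card u)) ((dlt ^^ card u) (gz n u))"
    using assms(2) by (metis funpow_add le_add_diff_inverse2 o_apply)
  then show ?thesis using dlt_pow_supp[OF s0, of "j - card u"] assms by auto
qed

lemma cnt_pos:
  assumes "u \<subseteq> {1..n}" "x \<in> u"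
  shows "cnt n u s \<ge> 1"
proof -
  define b where "b = (\<lambda>i::nat. if i = x then s else 0)"
  have "b \<in> Bs n u s" using assms
    by (auto simp: b_def Bs_def supp_in_def vsum_def sum.delta subset_iff)
  then have "Bs n u s \<noteq> {}" by blast
  then have "card (Bs n u s) > 0" using finite_Bs[OF assms(1), of s] by (simp add: card_gt_0_iff)
  then show ?thesis unfolding cnt_def by simp
qed

lemma gz_one:
  assumes "u \<subseteq> {1..n}" "card u = 1" "t \<ge> 0"
  shows "gz n u t = 1"
proof -
  obtain x where u: "u = {x}" using assms(2) card_1_singletonE by blast
  have step: "gz n u t = gz n u (t - 1) + (if t = 0 then 1 else 0)" for t
    using fun_cong[OF gz_step[OF assms(1), of x], of t] u by (simp add: dlt_def gz_empty)
  have "gz n u (int k) = 1" for k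
  proof (induction k)
    case 0 then show ?case using step[of 0] by (simp add: gz_def)
  next
    case (Suc k) then show ?case using step[of "int (Suc k)"] by simp
  qed
  then show ?thesis using assms(3) by (metis nonneg_int_cases)
qed

lemma gz_two:
  assumes "u \<subseteq> {1..n}" "card u \<ge> 2" "t \<ge> 0"
  shows "gz n u t \<ge> t + 1"
proof -
  have "finite u" using assms(1) finite_subset by blast
  have "u \<noteq> {}" using assms(2) by auto
  then obtain x where x: "x \<in> u" by blast
  have "card (u - {x}) \<ge> 1" using assms(2) x \<open>finite u\<close> by simp
  then have "u - {x} \<noteq> {}" by (metis card.empty not_one_le_zero)
  then obtain y where y: "y \<in> u - {x}" by blast
  have step: "gz n u t = gz n u (t - 1) + gz n (u - {x}) t" for t
    using fun_cong[OF gz_step[OF assms(1) x], of t] by (simp add: dlt_def)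
  have pos: "t \<ge> 0 \<Longrightarrow> gz n (u - {x}) t \<ge> 1" for t
    using cnt_pos[of "u - {x}" n y "nat t"] assms(1) y by (auto simp: gz_def)
  have "gz n u (int k) \<ge> int k + 1" for k
  proof (induction k)
    case 0 then show ?case using step[of 0] pos[of 0] by (simp add: gz_def)
  next
    case (Suc k) then show ?case using step[of "int (Suc k)"] pos[of "int (Suc k)"] by simp
  qed
  then show ?thesis using assms(3) by (metis nonneg_int_cases)
qed

lemma dlt_shift: "(dlt ^^ j) (\<lambda>t. f (t - c)) = (\<lambda>t. (dlt ^^ j) f (t - c))"
  by (induction j) (simp_all add: dlt_def diff_diff_eq add.commute)

lemma dlt_sum: "(dlt ^^ j) (\<lambda>t. \<Sum>a\<in>A. f a t) = (\<lambda>t. \<Sum>a\<in>A. (dlt ^^ j) (f a) t)"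
  by (induction j) (auto simp: dlt_def sum_subtractf)


definition lexless :: "(nat \<Rightarrow> nat) \<Rightarrow> (nat \<Rightarrow> nat) \<Rightarrow> bool" where
  "lexless a b \<longleftrightarrow> (\<exists>i. a i < b i \<and> (\<forall>j<i. a j = b j))"

lemma lex_irrefl: "\<not> lexless a a"
  by (auto simp: lexless_def)

lemma lex_trans: "lexless a b \<Longrightarrow> lexless b c \<Longrightarrow> lexless a c"
  unfolding lexless_def
  by (metis linorder_neqE_nat order.strict_trans)

lemma lex_total: "a \<noteq> b \<Longrightarrow> lexless a b \<or> lexless b a"
proof -
  assume "a \<noteq> b"
  then have "\<exists>i. a i \<noteq> b i" by (auto simp: fun_eq_iff)
  define i where "i = (LEAST i. a i \<noteq> b i)"
  have ne: "a i \<noteq> b i" unfolding i_def by (rule LeastI_ex) fact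
  have eq: "\<forall>j<i. a j = b j" unfolding i_def using not_less_Least by blast
  show ?thesis using ne eq unfolding lexless_def
    by (metis linorder_neqE_nat)
qed

lemma lex_add: "lexless a b \<Longrightarrow> lexless (\<lambda>i. a i + c i) (\<lambda>i. b i + c i)"
  unfolding lexless_def by auto

lemma lex_add2: "lexless a b \<Longrightarrow> lexless (\<lambda>i. c i + a i) (\<lambda>i. c i + b i)"
  unfolding lexless_def by auto

lemma lex_max:
  assumes "finite S" "S \<noteq> {}"
  shows "\<exists>m\<in>S. \<forall>b\<in>S. b \<noteq> m \<longrightarrow> lexless b m"
  using assms
proof (induction S rule: finite_ne_induct)
  case (singleton x) then show ?case by auto
next
  case (insert x F)
  then obtain m where m: "m \<in> F" "\<forall>b\<in>F. b \<noteq> m \<longrightarrow> lexless b m" by auto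
  show ?case
  proof (cases "lexless m x")
    case True
    then show ?thesis using m lex_trans by (intro bexI[of _ x]) auto
  next
    case False
    then have "x \<noteq> m \<longrightarrow> lexless x m" using lex_total by blast
    then show ?thesis using m by (intro bexI[of _ m]) auto
  qed
qed

lemma shift_app: "shift b h (a, j) = (if \<forall>i. b i \<le> a i then h (a - b, j) else 0)"
  by (simp add: shift_def)

lemma shift_indep:
  fixes h :: "mon \<Rightarrow> 'k::field"
  assumes fin: "finite {x. h x \<noteq> 0}" and nz: "h \<noteq> (\<lambda>_. 0)" and fA: "finite A"
    and sum0: "\<And>x. (\<Sum>b\<in>A. c b * shift b h x) = 0"
  shows "\<forall>b\<in>A. c b = 0"
proof (rule ccontr)
  assume nall: "\<not> (\<forall>b\<in>A. c b = 0)"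
  define S where "S = {b\<in>A. c b \<noteq> 0}"
  have "S \<noteq> {}" "finite S" using nall fA by (auto simp: S_def)
  then obtain bM where bM: "bM \<in> S" "\<forall>b\<in>S. b \<noteq> bM \<longrightarrow> lexless b bM"
    using lex_max by blast
  obtain x0 where "h x0 \<noteq> 0" using nz by (auto simp: fun_eq_iff)
  obtain a0 j0 where a0: "h (a0, j0) \<noteq> 0" using \<open>h x0 \<noteq> 0\<close> by (cases x0) auto
  define H where "H = {a. h (a, j0) \<noteq> 0}"
  have "H \<subseteq> fst ` {x. h x \<noteq> 0}" by (force simp: H_def)
  then have "finite H" using fin finite_subset by blast
  moreover have "H \<noteq> {}" using a0 by (auto simp: H_def)
  ultimately obtain aM where aM: "aM \<in> H" "\<forall>a\<in>H. a \<noteq> aM \<longrightarrow> lexless a aM"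
    using lex_max by blast
  define z where "z = (\<lambda>i. bM i + aM i)"
  have other: "c b * shift b h (z, j0) = 0" if "b \<in> A" "b \<noteq> bM" for b
  proof (cases "c b = 0")
    case False
    then have bS: "b \<in> S" using that by (auto simp: S_def)
    then have lb: "lexless b bM" using bM that by auto
    show ?thesis
    proof (cases "\<forall>i. b i \<le> z i")
      case True
      define a' where "a' = z - b"
      have za: "z = (\<lambda>i. a' i + b i)" using True by (auto simp: a'_def fun_eq_iff)
      have "h (a', j0) = 0"
      proof (rule ccontr)
        assume "h (a', j0) \<noteq> 0"
        then have "a' \<in> H" by (simp add: H_def)
        moreover have "a' \<noteq> aM"
        proof
          assume "a' = aM"
          then have "b = bM" using za by (auto simp: z_def fun_eq_iff)
          then show False using that by simp
        qed
        ultimately have "lexless a' aM" using aM by auto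
        then have l1: "lexless (\<lambda>i. a' i + b i) (\<lambda>i. aM i + b i)" by (rule lex_add)
        have l2: "lexless (\<lambda>i. aM i + b i) (\<lambda>i. aM i + bM i)" using lb by (rule lex_add2)
        have "lexless z z" using lex_trans[OF l1 l2] za
          by (simp add: z_def add.commute)
        then show False using lex_irrefl by blast
      qed
      then show ?thesis using True by (simp add: shift_app a'_def)
    next
      case False
      then show ?thesis by (auto simp: shift_app)
    qed
  qed simp
  have bMA: "bM \<in> A" using bM by (auto simp: S_def)
  have "(\<Sum>b\<in>A. c b * shift b h (z, j0)) = c bM * shift bM h (z, j0)"
  proof -
    have "(\<Sum>b\<in>A. c b * shift b h (z, j0)) = c bM * shift bM h (z, j0) + (\<Sum>b\<in>A - {bM}. c b * shift b h (z, j0))"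
      by (rule sum.remove[OF fA bMA])
    also have "(\<Sum>b\<in>A - {bM}. c b * shift b h (z, j0)) = 0"
      using other by (intro sum.neutral) auto
    finally show ?thesis by simp
  qed
  also have "shift bM h (z, j0) = h (aM, j0)"
    by (simp add: shift_app z_def fun_diff_def)
  finally have "c bM * h (aM, j0) = 0" using sum0[of "(z, j0)"] by simp
  then show False using bM aM by (auto simp: S_def H_def)
qed


lemma sum_fun_apply: "(\<Sum>a\<in>A. f a) x = (\<Sum>a\<in>A. (f a x :: 'b::comm_monoid_add))"
  by (induction A rule: infinite_finite_induct) (auto simp: zero_fun_def)

interpretation FV: vector_space "\<lambda>(c::'k::field) (f::'a \<Rightarrow> 'k) x. c * f x"
  by unfold_locales (auto simp: fun_eq_iff algebra_simps)

lemma kspan_eq: "kspan S = FV.span S"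
  unfolding kspan_def FV.span_explicit
  by (auto simp: fun_eq_iff sum_fun_apply)

definition gens :: "(mon \<Rightarrow> 'k::field) \<times> nat set \<Rightarrow> (mon \<Rightarrow> 'k) set" where
  "gens C = {shift b (fst C) | b. supp_in (snd C) b}"

lemma cone_set_eq: "cone_set C = FV.span (gens C)"
  unfolding cone_set_def kspan_eq gens_def supp_in_def by simp

definition part :: "nat \<Rightarrow> (nat \<Rightarrow> nat) \<Rightarrow> nat \<Rightarrow> (mon \<Rightarrow> 'k::field) \<Rightarrow> mon \<Rightarrow> 'k" where
  "part n delta t f = (\<lambda>x. if mdeg delta n x = t then f x else 0)"

definition Bc :: "nat \<Rightarrow> (nat \<Rightarrow> nat) \<Rightarrow> (mon \<Rightarrow> 'k::field) \<times> nat set \<Rightarrow> nat \<Rightarrow> (mon \<Rightarrow> 'k) set" where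
  "Bc n delta C t = (\<lambda>b. shift b (fst C)) ` {b. supp_in (snd C) b \<and> cdeg n delta C + vsum n b = t}"

lemma hdeg_eq:
  assumes "homog n m delta e h" "h \<noteq> (\<lambda>_. 0)"
  shows "hdeg n delta h = e"
proof -
  obtain x where x: "h x \<noteq> 0" using assms(2) by (auto simp: fun_eq_iff)
  show ?thesis unfolding hdeg_def
  proof (rule the_equality)
    show "\<forall>x. h x \<noteq> 0 \<longrightarrow> mdeg delta n x = e" using assms(1) by (simp add: homog_def)
  next
    fix d assume "\<forall>x. h x \<noteq> 0 \<longrightarrow> mdeg delta n x = d"
    then show "d = e" using x assms(1) unfolding homog_def by metis
  qed
qed

lemma mdeg_shift:
  assumes "\<forall>i. b i \<le> a i"
  shows "mdeg delta n (a, j) = mdeg delta n (a - b, j) + vsum n b"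
proof -
  have "(\<Sum>i=1..n. a i) = (\<Sum>i=1..n. (a - b) i + b i)"
    using assms by (intro sum.cong) auto
  then show ?thesis by (simp add: mdeg_def vsum_def sum.distrib)
qed

lemma shift_nz_deg:
  assumes "homog n m delta e h" "shift b h x \<noteq> 0"
  shows "mdeg delta n x = e + vsum n b"
proof -
  obtain a j where x: "x = (a, j)" by (cases x)
  have le: "\<forall>i. b i \<le> a i" and hz: "h (a - b, j) \<noteq> 0"
    using assms(2) by (auto simp: x shift_app split: if_splits)
  have "mdeg delta n (a - b, j) = e" using hz assms(1) by (simp add: homog_def)
  then show ?thesis using mdeg_shift[OF le] x by simp
qed

lemma part_shift:
  assumes "homog n m delta e h"
  shows "part n delta t (shift b h) = (if e + vsum n b = t then shift b h else (\<lambda>_. 0))"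
proof (rule ext)
  fix x show "part n delta t (shift b h) x = (if e + vsum n b = t then shift b h else (\<lambda>_. 0)) x"
    using shift_nz_deg[OF assms, of b x] unfolding part_def by (cases "shift b h x = 0") auto
qed

lemma part_lin:
  "part n delta t (\<lambda>x. \<Sum>a\<in>A. c a * f a x) = (\<lambda>x. \<Sum>a\<in>A. c a * part n delta t (f a) x)"
  by (auto simp: part_def fun_eq_iff)

lemma part_span_sum:
  "part n delta t (\<Sum>a\<in>A. f a) = (\<Sum>a\<in>A. part n delta t (f a))"
  by (auto simp: part_def fun_eq_iff sum_fun_apply)

lemma cone_homog:
  assumes "valid_cone n m delta C"
  obtains e where "homog n m delta e (fst C)" "cdeg n delta C = e"
  using assms hdeg_eq by (fastforce simp: valid_cone_def cdeg_def)

lemma part_cone: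
  assumes "valid_cone n m delta C" "f \<in> cone_set C"
  shows "part n delta t f \<in> FV.span (Bc n delta C t)"
proof -
  obtain e where e: "homog n m delta e (fst C)" "cdeg n delta C = e"
    using cone_homog[OF assms(1)] by blast
  obtain T r where T: "finite T" "T \<subseteq> gens C" "f = (\<Sum>a\<in>T. (\<lambda>x. r a * a x))"
    using assms(2) unfolding cone_set_eq FV.span_explicit by blast
  have "part n delta t f = (\<Sum>a\<in>T. (\<lambda>x. r a * part n delta t a x))"
    using T(3) by (auto simp: part_def fun_eq_iff sum_fun_apply)
  also have "\<dots> \<in> FV.span (Bc n delta C t)"
  proof (rule FV.span_sum)
    fix a assume "a \<in> T"
    then obtain b where b: "supp_in (snd C) b" "a = shift b (fst C)" using T(2) by (auto simp: gens_def)
    have "part n delta t a \<in> FV.span (Bc n delta C t)"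
    proof (cases "e + vsum n b = t")
      case True
      then have "part n delta t a \<in> Bc n delta C t"
        using b e part_shift[OF e(1), of t b] by (auto simp: Bc_def)
      then show ?thesis by (rule FV.span_base)
    next
      case False
      then have "part n delta t a = 0" using b part_shift[OF e(1), of t b] by (simp add: zero_fun_def)
      then show ?thesis using FV.span_zero by simp
    qed
    then show "(\<lambda>x. r a * part n delta t a x) \<in> FV.span (Bc n delta C t)"
      by (rule FV.span_scale)
  qed
  finally show ?thesis .
qed

lemma Bc_sub: "Bc n delta C t \<subseteq> cone_set C"
  unfolding cone_set_eq Bc_def gens_def
  by (auto intro: FV.span_base)

lemma shift_inj:
  fixes h :: "mon \<Rightarrow> 'k::field"
  assumes fin: "finite {x. h x \<noteq> 0}" and nz: "h \<noteq> (\<lambda>_. 0)"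
  shows "inj (\<lambda>b. shift b h)"
proof (rule injI, rule ccontr)
  fix b b' assume eq: "shift b h = shift b' h" and ne: "b \<noteq> b'"
  define c where "c = (\<lambda>x. if x = b then (1::'k) else -1)"
  have "\<forall>a\<in>{b, b'}. c a = 0"
    by (rule shift_indep[OF fin nz]) (use eq ne in \<open>auto simp: c_def\<close>)
  then show False by (simp add: c_def)
qed

lemma Bc_indep:
  assumes "valid_cone n m delta C"
  shows "FV.independent (Bc n delta C t)"
proof -
  obtain e where e: "homog n m delta e (fst C)" "cdeg n delta C = e"
    using cone_homog[OF assms(1)] by blast
  have fin: "finite {x. fst C x \<noteq> 0}" using e by (simp add: homog_def in_F_def)
  have nz: "fst C \<noteq> (\<lambda>_. 0)" using assms by (simp add: valid_cone_def)
  have inj: "inj (\<lambda>b. shift b (fst C))" by (rule shift_inj[OF fin nz])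
  show ?thesis unfolding FV.dependent_explicit
  proof clarify
    fix T u v assume T: "finite T" "T \<subseteq> Bc n delta C t" and s: "(\<Sum>v\<in>T. (\<lambda>x. u v * v x)) = 0"
      and v: "v \<in> T" "u v \<noteq> 0"
    define A where "A = (\<lambda>b. shift b (fst C)) -` T"
    have fA: "finite A" unfolding A_def using T(1) inj by (intro finite_vimageI)
    have TA: "T = (\<lambda>b. shift b (fst C)) ` A" using T(2) by (auto simp: A_def Bc_def)
    have "\<forall>b\<in>A. u (shift b (fst C)) = 0"
    proof (rule shift_indep[OF fin nz fA])
      fix x
      have "(\<Sum>b\<in>A. u (shift b (fst C)) * shift b (fst C) x) = (\<Sum>v\<in>T. u v * v x)"
        unfolding TA by (rule sum.reindex_cong[symmetric, OF inj_on_subset[OF inj]]) auto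
      also have "\<dots> = 0" using fun_cong[OF s, of x] by (simp add: sum_fun_apply)
      finally show "(\<Sum>b\<in>A. u (shift b (fst C)) * shift b (fst C) x) = 0" .
    qed
    then show False using v TA by auto
  qed
qed

lemma Bc_card:
  assumes "valid_cone n m delta C"
  shows "finite (Bc n delta C t)"
    "card (Bc n delta C t) = (if cdeg n delta C \<le> t then cnt n (snd C) (t - cdeg n delta C) else 0)"
proof -
  obtain e where e: "homog n m delta e (fst C)" "cdeg n delta C = e"
    using cone_homog[OF assms(1)] by blast
  have fin: "finite {x. fst C x \<noteq> 0}" using e by (simp add: homog_def in_F_def)
  have nz: "fst C \<noteq> (\<lambda>_. 0)" using assms by (simp add: valid_cone_def)
  have inj: "inj (\<lambda>b. shift b (fst C))" by (rule shift_inj[OF fin nz])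
  have u: "snd C \<subseteq> {1..n}" using assms by (simp add: valid_cone_def)
  have S: "{b. supp_in (snd C) b \<and> cdeg n delta C + vsum n b = t} =
      (if cdeg n delta C \<le> t then Bs n (snd C) (t - cdeg n delta C) else {})"
    by (auto simp: Bs_def)
  show "finite (Bc n delta C t)" unfolding Bc_def S using finite_Bs[OF u] by auto
  show "card (Bc n delta C t) = (if cdeg n delta C \<le> t then cnt n (snd C) (t - cdeg n delta C) else 0)"
    unfolding Bc_def S cnt_def using card_image[OF inj_on_subset[OF inj]] by auto
qed


definition boxmon :: "nat \<Rightarrow> nat \<Rightarrow> (nat \<Rightarrow> nat) \<Rightarrow> nat \<Rightarrow> mon \<Rightarrow> bool" where
  "boxmon n m d r x \<longleftrightarrow> valid_mon n m x \<and> (\<forall>i\<in>{1..n-r}. fst x i < d i)"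

definition ind :: "mon \<Rightarrow> mon \<Rightarrow> 'k::field" where
  "ind x = (\<lambda>y. if y = x then 1 else 0)"

lemma N_JF_eq: "N_JF n m d r = FV.span (ind ` {x. boxmon n m d r x})"
  unfolding N_JF_def kspan_eq ind_def boxmon_def
  by (rule arg_cong[where f = FV.span]) blast

lemma N_JF_supp:
  assumes "f \<in> N_JF n m d r"
  shows "finite {x. f x \<noteq> 0}" "\<And>x. f x \<noteq> 0 \<Longrightarrow> boxmon n m d r x"
proof -
  obtain T c where T: "finite T" "T \<subseteq> ind ` {x. boxmon n m d r x}" "f = (\<Sum>a\<in>T. (\<lambda>x. c a * a x))"
    using assms unfolding N_JF_eq FV.span_explicit by blast
  obtain X where X: "X \<subseteq> {x. boxmon n m d r x}" "T = ind ` X" "finite X"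
    using T(1,2) by (metis finite_subset_image)
  have sub: "{x. f x \<noteq> 0} \<subseteq> X"
  proof
    fix x assume "x \<in> {x. f x \<noteq> 0}"
    then have "(\<Sum>a\<in>T. c a * a x) \<noteq> 0" using T(3) by (simp add: sum_fun_apply)
    then have "\<exists>a\<in>T. a x \<noteq> 0"
    proof (rule contrapos_np)
      assume "\<not> (\<exists>a\<in>T. a x \<noteq> 0)"
      then show "(\<Sum>a\<in>T. c a * a x) = 0" by (intro sum.neutral) auto
    qed
    then obtain a where "a \<in> T" "a x \<noteq> 0" by blast
    then show "x \<in> X" using X by (auto simp: ind_def split: if_splits)
  qed
  then show "finite {x. f x \<noteq> 0}" using X(3) finite_subset by blast
  show "f x \<noteq> 0 \<Longrightarrow> boxmon n m d r x" for x using sub X(1) by blast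
qed

lemma finite_boxdeg: "finite {x. boxmon n m d r x \<and> mdeg delta n x = t}"
proof -
  have "{x. boxmon n m d r x \<and> mdeg delta n x = t} \<subseteq>
     {f. \<forall>i. (i \<in> {1..n} \<longrightarrow> f i \<in> {..t}) \<and> (i \<notin> {1..n} \<longrightarrow> f i = 0)} \<times> {1..m}"
  proof
    fix x assume x: "x \<in> {x. boxmon n m d r x \<and> mdeg delta n x = t}"
    obtain a j where aj: "x = (a, j)" by (cases x)
    have t: "t = sum a {1..n} + delta j" using x by (simp add: aj mdeg_def)
    have "a i \<le> t" if "i \<in> {1..n}" for i
    proof -
      have "a i \<le> sum a {1..n}" by (rule member_le_sum) (use that in auto)
      then show ?thesis using t by simp
    qed
    then show "x \<in> {f. \<forall>i. (i \<in> {1..n} \<longrightarrow> f i \<in> {..t}) \<and> (i \<notin> {1..n} \<longrightarrow> f i = 0)} \<times> {1..m}"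
      using x unfolding aj boxmon_def valid_mon_def by auto
  qed
  moreover have "finite ({f. \<forall>i. (i \<in> {1..n} \<longrightarrow> f i \<in> {..t}) \<and> (i \<notin> {1..n} \<longrightarrow> f i = (0::nat))} \<times> {1..m})"
    by (intro finite_cartesian_product finite_set_of_finite_funs) auto
  ultimately show ?thesis by (rule finite_subset)
qed

lemma ind_inj: "inj ind"
  by (rule injI) (auto simp: ind_def fun_eq_iff split: if_splits)

lemma ind_indep: "FV.independent ((ind :: mon \<Rightarrow> mon \<Rightarrow> 'k::field) ` X)"
proof (rule notI)
  assume "FV.dependent ((ind :: mon \<Rightarrow> mon \<Rightarrow> 'k) ` X)"
  then obtain T u v where T: "finite T" "T \<subseteq> (ind :: mon \<Rightarrow> mon \<Rightarrow> 'k) ` X" and s: "(\<Sum>v\<in>T. (\<lambda>x. u v * v x)) = 0"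
    and v: "v \<in> T" "u v \<noteq> 0" unfolding FV.dependent_explicit by blast
  obtain y where y: "v = ind y" using v T by auto
  have "(\<Sum>w\<in>T. u w * w y) = u v"
  proof -
    have "(\<Sum>w\<in>T. u w * w y) = u v * v y + (\<Sum>w\<in>T - {v}. u w * w y)"
      by (rule sum.remove[OF T(1) v(1)])
    also have "(\<Sum>w\<in>T - {v}. u w * w y) = 0"
    proof (rule sum.neutral, rule ballI)
      fix w assume "w \<in> T - {v}"
      then obtain z where z: "w = ind z" using T by blast
      then have "z \<noteq> y" using \<open>w \<in> T - {v}\<close> y by auto
      then show "u w * w y = 0" using z by (simp add: ind_def)
    qed
    finally show ?thesis by (simp add: y ind_def)
  qed
  moreover have "(\<Sum>w\<in>T. u w * w y) = 0" using fun_cong[OF s, of y] by (simp add: sum_fun_apply)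
  ultimately show False using v by simp
qed

lemma in_span_ind:
  fixes f :: "mon \<Rightarrow> 'k::field"
  assumes "finite {x. f x \<noteq> 0}" "\<And>x. f x \<noteq> 0 \<Longrightarrow> x \<in> X"
  shows "f \<in> FV.span (ind ` X)"
proof -
  let ?S = "{x. f x \<noteq> 0}"
  have "f = (\<Sum>x\<in>?S. (\<lambda>y. f x * ind x y))"
  proof (rule ext)
    fix y
    show "f y = (\<Sum>x\<in>?S. (\<lambda>y. f x * ind x y)) y"
      unfolding sum_fun_apply using assms(1)
      by (cases "f y = 0") (auto simp: ind_def if_distrib sum.delta' cong: if_cong)
  qed
  also have "\<dots> \<in> FV.span (ind ` X)"
    using assms(2) by (intro FV.span_sum FV.span_scale FV.span_base) auto
  finally show ?thesis .
qed

lemma sum_single: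
  assumes "finite P" "C \<in> P" "\<And>C'. C' \<in> P \<Longrightarrow> C' \<noteq> C \<Longrightarrow> f C' = 0"
  shows "sum f P = (f C :: 'b::comm_monoid_add)"
proof -
  have "sum f P = f C + sum f (P - {C})" by (rule sum.remove[OF assms(1,2)])
  also have "sum f (P - {C}) = 0" using assms(3) by (intro sum.neutral) auto
  finally show ?thesis by simp
qed

lemma Bc_gens: "Bc n delta C t \<subseteq> gens C"
  by (auto simp: Bc_def gens_def)

lemma count_identity:
  fixes P :: "((mon \<Rightarrow> 'k::field) \<times> nat set) set"
  assumes dec: "cone_decomp n m delta (N_JF n m d r) P"
  shows "(\<Sum>C\<in>P. card (Bc n delta C t)) = card {x. boxmon n m d r x \<and> mdeg delta n x = t}"
proof -
  have finP: "finite P" and valid: "\<And>C. C \<in> P \<Longrightarrow> valid_cone n m delta C"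
    and T: "N_JF n m d r = {(\<lambda>x. \<Sum>C\<in>P. g C x) | g. \<forall>C\<in>P. g C \<in> cone_set C}"
    and direct: "\<And>g. \<forall>C\<in>P. g C \<in> cone_set C \<Longrightarrow> (\<lambda>x. \<Sum>C\<in>P. g C x) = (\<lambda>_. 0) \<Longrightarrow> \<forall>C\<in>P. g C = (\<lambda>_. 0)"
    using dec unfolding cone_decomp_def by blast+
  have zero_in: "(\<lambda>_. 0) \<in> cone_set C" for C :: "(mon \<Rightarrow> 'k) \<times> nat set"
    using FV.span_zero[of "gens C"] by (simp add: cone_set_eq zero_fun_def)
  have single: "b \<in> N_JF n m d r" if "C \<in> P" "b \<in> cone_set C" for b C
  proof -
    define g where "g = (\<lambda>C'. if C' = C then b else (\<lambda>_. 0))"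
    have "\<forall>C'\<in>P. g C' \<in> cone_set C'" using that zero_in by (auto simp: g_def)
    moreover have "(\<lambda>x. \<Sum>C'\<in>P. g C' x) = b"
    proof (rule ext)
      fix x show "(\<Sum>C'\<in>P. g C' x) = b x"
        using sum_single[OF finP that(1), of "\<lambda>C'. g C' x"] by (simp add: g_def)
    qed
    ultimately show ?thesis unfolding T by blast
  qed
  have nz: "0 \<notin> Bc n delta C t" if "C \<in> P" for C
    using Bc_indep[OF valid[OF that]] FV.dependent_zero by blast
  have disj: "Bc n delta C t \<inter> Bc n delta C' t = {}" if "C \<in> P" "C' \<in> P" "C \<noteq> C'" for C C'
  proof (rule ccontr)
    assume "Bc n delta C t \<inter> Bc n delta C' t \<noteq> {}"
    then obtain b where b: "b \<in> Bc n delta C t" "b \<in> Bc n delta C' t" by blast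
    define g where "g = (\<lambda>D. if D = C then b else if D = C' then (\<lambda>x. (-1) * b x) else (\<lambda>_. 0))"
    have bC: "b \<in> cone_set C" "b \<in> cone_set C'" using b Bc_sub by blast+
    have "(\<lambda>x. (-1) * b x) \<in> cone_set C'"
      using FV.span_scale[of b "gens C'" "-1"] bC(2) by (simp add: cone_set_eq)
    then have gc: "\<forall>D\<in>P. g D \<in> cone_set D" using bC zero_in that by (auto simp: g_def)
    have "(\<lambda>x. \<Sum>D\<in>P. g D x) = (\<lambda>_. 0)"
    proof (rule ext)
      fix x
      have "(\<Sum>D\<in>P. g D x) = g C x + (\<Sum>D\<in>P - {C}. g D x)" by (rule sum.remove[OF finP that(1)])
      also have "(\<Sum>D\<in>P - {C}. g D x) = g C' x"
        by (intro sum_single) (use finP that in \<open>auto simp: g_def\<close>)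
      finally show "(\<Sum>D\<in>P. g D x) = 0" using that by (simp add: g_def)
    qed
    then have "g C = (\<lambda>_. 0)" using direct[OF gc] that by blast
    then have "b = 0" by (simp add: g_def zero_fun_def)
    then show False using b nz that by blast
  qed
  define U where "U = (\<Union>C\<in>P. Bc n delta C t)"
  define X where "X = {x. boxmon n m d r x \<and> mdeg delta n x = t}"
  define Mt where "Mt = (ind :: mon \<Rightarrow> mon \<Rightarrow> 'k) ` X"
  have indepU: "FV.independent U"
    unfolding FV.dependent_explicit
  proof clarify
    fix T u v assume T: "finite T" "T \<subseteq> U" and s: "(\<Sum>v\<in>T. (\<lambda>x. u v * v x)) = 0"
      and v: "v \<in> T" "u v \<noteq> 0"
    define TC where "TC = (\<lambda>C. T \<inter> Bc n delta C t)"
    define g where "g = (\<lambda>C. (\<Sum>v\<in>TC C. (\<lambda>x. u v * v x)))"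
    have gc: "\<forall>C\<in>P. g C \<in> cone_set C"
    proof
      fix C assume "C \<in> P"
      have "g C \<in> FV.span (Bc n delta C t)" unfolding g_def TC_def
        by (intro FV.span_sum FV.span_scale FV.span_base) auto
      then show "g C \<in> cone_set C" unfolding cone_set_eq using FV.span_mono[OF Bc_gens] by blast
    qed
    have TU: "T = (\<Union>C\<in>P. TC C)" using T(2) by (auto simp: TC_def U_def)
    have "(\<lambda>x. \<Sum>C\<in>P. g C x) = (\<lambda>_. 0)"
    proof (rule ext)
      fix x
      have "(\<Sum>C\<in>P. g C x) = (\<Sum>C\<in>P. \<Sum>v\<in>TC C. u v * v x)"
        by (simp add: g_def sum_fun_apply)
      also have "\<dots> = (\<Sum>v\<in>T. u v * v x)"
        unfolding TU
      proof (rule sum.UNION_disjoint[symmetric])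
        show "finite P" by (rule finP)
        show "\<forall>C\<in>P. finite (TC C)" using T(1) by (simp add: TC_def)
        show "\<forall>C\<in>P. \<forall>C'\<in>P. C \<noteq> C' \<longrightarrow> TC C \<inter> TC C' = {}"
          using disj unfolding TC_def by blast
      qed
      also have "\<dots> = 0" using fun_cong[OF s, of x] by (simp add: sum_fun_apply)
      finally show "(\<Sum>C\<in>P. g C x) = 0" .
    qed
    then have g0: "\<forall>C\<in>P. g C = (\<lambda>_. 0)" using direct[OF gc] by blast
    obtain C where C: "C \<in> P" "v \<in> Bc n delta C t" using v T(2) by (auto simp: U_def)
    have "FV.independent (Bc n delta C t)" by (rule Bc_indep[OF valid[OF C(1)]])
    moreover have "(\<Sum>v\<in>TC C. (\<lambda>x. u v * v x)) = 0" using g0 C(1) by (simp add: g_def zero_fun_def)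
    moreover have "finite (TC C)" "TC C \<subseteq> Bc n delta C t" "v \<in> TC C"
      using T(1) v C by (auto simp: TC_def)
    ultimately show False using v(2) unfolding FV.dependent_explicit by blast
  qed
  have UM: "U \<subseteq> FV.span Mt"
  proof
    fix b assume "b \<in> U"
    then obtain C where C: "C \<in> P" "b \<in> Bc n delta C t" by (auto simp: U_def)
    have bN: "b \<in> N_JF n m d r" using single[OF C(1)] Bc_sub C(2) by blast
    obtain e where e: "homog n m delta e (fst C)" "cdeg n delta C = e"
      using cone_homog[OF valid[OF C(1)]] by blast
    obtain beta where beta: "b = shift beta (fst C)" "e + vsum n beta = t"
      using C(2) e by (auto simp: Bc_def)
    show "b \<in> FV.span Mt" unfolding Mt_def
    proof (rule in_span_ind)
      show "finite {x. b x \<noteq> 0}" by (rule N_JF_supp(1)[OF bN])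
      fix x assume "b x \<noteq> 0"
      then show "x \<in> X" using N_JF_supp(2)[OF bN] shift_nz_deg[OF e(1), of beta x] beta
        by (auto simp: X_def)
    qed
  qed
  have MU: "FV.span Mt \<subseteq> FV.span U"
  proof (rule FV.span_minimal[OF _ FV.subspace_span])
    show "Mt \<subseteq> FV.span U"
    proof
      fix f assume "f \<in> Mt"
      then obtain x where x: "x \<in> X" "f = ind x" by (auto simp: Mt_def)
      have "f \<in> N_JF n m d r" unfolding N_JF_eq using x
        by (intro FV.span_base) (auto simp: X_def)
      then obtain g where g: "\<forall>C\<in>P. g C \<in> cone_set C" "f = (\<lambda>x. \<Sum>C\<in>P. g C x)"
        unfolding T by blast
      have "f = part n delta t f" using x by (auto simp: part_def ind_def X_def fun_eq_iff)
      also have "\<dots> = (\<Sum>C\<in>P. part n delta t (g C))"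
        unfolding g(2) by (auto simp: part_def fun_eq_iff sum_fun_apply)
      also have "\<dots> \<in> FV.span U"
      proof (rule FV.span_sum)
        fix C assume "C \<in> P"
        then have "part n delta t (g C) \<in> FV.span (Bc n delta C t)"
          using part_cone[OF valid] g(1) by blast
        moreover have "FV.span (Bc n delta C t) \<subseteq> FV.span U"
          using \<open>C \<in> P\<close> by (intro FV.span_mono) (auto simp: U_def)
        ultimately show "part n delta t (g C) \<in> FV.span U" by blast
      qed
      finally show "f \<in> FV.span U" .
    qed
  qed
  have c1: "card Mt = FV.dim (FV.span Mt)"
    unfolding Mt_def by (rule FV.basis_card_eq_dim[OF FV.span_superset order.refl ind_indep])
  have c2: "card U = FV.dim (FV.span Mt)"
    by (rule FV.basis_card_eq_dim[OF UM MU indepU])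
  have c3: "card U = (\<Sum>C\<in>P. card (Bc n delta C t))"
    unfolding U_def
  proof (rule card_UN_disjoint)
    show "finite P" by (rule finP)
    show "\<forall>C\<in>P. finite (Bc n delta C t)" using Bc_card(1)[OF valid] by blast
    show "\<forall>C\<in>P. \<forall>C'\<in>P. C \<noteq> C' \<longrightarrow> Bc n delta C t \<inter> Bc n delta C' t = {}"
      using disj by blast
  qed
  have c4: "card Mt = card X"
    unfolding Mt_def by (rule card_image[OF inj_on_subset[OF ind_inj]]) auto
  show ?thesis using c1 c2 c3 c4 by (simp add: X_def)
qed


definition Box :: "nat \<Rightarrow> nat \<Rightarrow> (nat \<Rightarrow> nat) \<Rightarrow> (nat \<Rightarrow> nat) set" where
  "Box n r d = {a. \<forall>i. (i \<in> {1..n-r} \<longrightarrow> a i \<in> {..<d i}) \<and> (i \<notin> {1..n-r} \<longrightarrow> a i = 0)}"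

lemma card_funs:
  assumes "finite A"
  shows "card {f. \<forall>x. (x \<in> A \<longrightarrow> f x \<in> B x) \<and> (x \<notin> A \<longrightarrow> f x = z)} = (\<Prod>x\<in>A. card (B x))"
proof -
  let ?S = "{f. \<forall>x. (x \<in> A \<longrightarrow> f x \<in> B x) \<and> (x \<notin> A \<longrightarrow> f x = z)}"
  have "bij_betw (\<lambda>f. restrict f A) ?S (PiE A B)"
  proof (rule bij_betwI')
    fix f g assume f: "f \<in> ?S" and g: "g \<in> ?S"
    show "(restrict f A = restrict g A) = (f = g)"
    proof
      assume e: "restrict f A = restrict g A"
      show "f = g"
      proof
        fix x show "f x = g x"
        proof (cases "x \<in> A")
          case True then show ?thesis using fun_cong[OF e, of x] by simp
        next
          case False then show ?thesis using f g by simp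
        qed
      qed
    qed simp
  next
    fix f assume "f \<in> ?S" then show "restrict f A \<in> PiE A B" by auto
  next
    fix g assume g: "g \<in> PiE A B"
    define f where "f = (\<lambda>x. if x \<in> A then g x else z)"
    have "f \<in> ?S" using g by (auto simp: f_def)
    moreover have "g = restrict f A" using g by (auto simp: f_def fun_eq_iff PiE_def extensional_def)
    ultimately show "\<exists>f\<in>?S. g = restrict f A" by blast
  qed
  then have "card ?S = card (PiE A B)" by (rule bij_betw_same_card)
  also have "\<dots> = (\<Prod>x\<in>A. card (B x))" by (rule card_PiE[OF assms])
  finally show ?thesis .
qed

lemma card_Box: "card (Box n r d) = (\<Prod>i=1..n-r. d i)"
  unfolding Box_def by (subst card_funs) auto

lemma finite_Box: "finite (Box n r d)"
proof -
  let ?M = "\<Sum>i\<in>{1..n-r}. d i"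
  have "Box n r d \<subseteq> {f. \<forall>i. (i \<in> {1..n-r} \<longrightarrow> f i \<in> {..?M}) \<and> (i \<notin> {1..n-r} \<longrightarrow> f i = 0)}"
  proof
    fix a assume a: "a \<in> Box n r d"
    have "a i \<le> ?M" if "i \<in> {1..n-r}" for i
    proof -
      have "d i \<le> ?M" by (rule member_le_sum) (use that in auto)
      moreover have "a i < d i" using a that by (auto simp: Box_def)
      ultimately show ?thesis by simp
    qed
    then show "a \<in> {f. \<forall>i. (i \<in> {1..n-r} \<longrightarrow> f i \<in> {..?M}) \<and> (i \<notin> {1..n-r} \<longrightarrow> f i = 0)}"
      using a by (auto simp: Box_def)
  qed
  moreover have "finite {f. \<forall>i. (i \<in> {1..n-r} \<longrightarrow> f i \<in> {..?M}) \<and> (i \<notin> {1..n-r} \<longrightarrow> f i = (0::nat))}"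
    by (rule finite_set_of_finite_funs) auto
  ultimately show ?thesis by (rule finite_subset)
qed

lemma vsum_split:
  "vsum n (\<lambda>i. a i + b i) = vsum n a + vsum n b"
  by (rule vsum_add)

lemma N_decomp:
  assumes "r \<le> n"
  shows "card {x. boxmon n m d r x \<and> mdeg delta n x = t} =
     (\<Sum>p\<in>Box n r d \<times> {1..m}. (if vsum n (fst p) + delta (snd p) \<le> t
        then cnt n {n-r+1..n} (t - (vsum n (fst p) + delta (snd p))) else 0))"
proof -
  let ?L = "{n-r+1..n}"
  let ?Q = "Box n r d \<times> {1..m}"
  let ?c = "\<lambda>p. vsum n (fst p) + delta (snd p)"
  let ?F = "\<lambda>p. {b. supp_in ?L b \<and> vsum n b + ?c p = t}"
  let ?phi = "\<lambda>(p, b). ((\<lambda>i. fst p i + b i), snd p)"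
  have L: "?L \<subseteq> {1..n}" using assms by auto
  have hA: "a i = 0" if "a \<in> Box n r d" "i \<notin> {1..n-r}" for a i
    using that unfolding Box_def by blast
  have hA2: "i \<in> {1..n}" if "a \<in> Box n r d" "a i \<noteq> 0" for a i
  proof (rule ccontr)
    assume "i \<notin> {1..n}"
    then have "i \<notin> {1..n-r}" by auto
    then have "a i = 0" by (rule hA[OF that(1)])
    with that(2) show False by simp
  qed
  have hB: "b i = 0" if "supp_in ?L b" "i \<in> {1..n-r}" for b i
  proof (rule ccontr)
    assume "b i \<noteq> 0"
    then have "i \<in> ?L" using that(1) unfolding supp_in_def by blast
    then have "n - r + 1 \<le> i" by simp
    moreover have "i \<le> n - r" using that(2) by simp
    ultimately show False by linarith
  qed
  have hB2: "i \<in> {1..n}" if "supp_in ?L b" "b i \<noteq> 0" for b i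
  proof -
    have "i \<in> ?L" using that unfolding supp_in_def by blast
    then show ?thesis using L by blast
  qed
  have Fe: "?F p = (if ?c p \<le> t then Bs n ?L (t - ?c p) else {})" for p
  proof (cases "?c p \<le> t")
    case True
    have "vsum n b + ?c p = t \<longleftrightarrow> vsum n b = t - ?c p" for b using True by arith
    then show ?thesis using True unfolding Bs_def by simp
  next
    case False
    then show ?thesis by auto
  qed
  have finF: "finite (?F p)" for p unfolding Fe using finite_Bs[OF L] by auto
  have eq: "{x. boxmon n m d r x \<and> mdeg delta n x = t} = ?phi ` (SIGMA p:?Q. ?F p)"
  proof (rule set_eqI, rule iffI)
    fix x assume x: "x \<in> {x. boxmon n m d r x \<and> mdeg delta n x = t}"
    obtain a j where aj: "x = (a, j)" by (cases x)
    define a' where "a' = (\<lambda>i. if i \<le> n - r then a i else 0)"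
    define b where "b = (\<lambda>i. if i \<le> n - r then 0 else a i)"
    have valid: "\<forall>i. a i \<noteq> 0 \<longrightarrow> i \<in> {1..n}" "j \<in> {1..m}" "\<forall>i\<in>{1..n-r}. a i < d i"
      using x by (auto simp: aj boxmon_def valid_mon_def)
    have ab: "a = (\<lambda>i. a' i + b i)" by (auto simp: a'_def b_def)
    have "a' \<in> Box n r d" using valid by (auto simp: Box_def a'_def)
    moreover have "supp_in ?L b" using valid by (auto simp: supp_in_def b_def)
    moreover have "vsum n b + (vsum n a' + delta j) = t"
    proof -
      have "mdeg delta n x = vsum n a + delta j" by (simp add: aj mdeg_def vsum_def)
      then show ?thesis using x ab vsum_split[of n a' b] by simp
    qed
    ultimately have "((a', j), b) \<in> (SIGMA p:?Q. ?F p)" using valid by auto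
    moreover have "x = ?phi ((a', j), b)" using ab aj by simp
    ultimately show "x \<in> ?phi ` (SIGMA p:?Q. ?F p)" by blast
  next
    fix x assume "x \<in> ?phi ` (SIGMA p:?Q. ?F p)"
    then obtain a' j b where s: "a' \<in> Box n r d" "j \<in> {1..m}" "supp_in ?L b"
      "vsum n b + (vsum n a' + delta j) = t" and x: "x = ((\<lambda>i. a' i + b i), j)"
      by auto
    have v1: "\<forall>i. a' i + b i \<noteq> 0 \<longrightarrow> i \<in> {1..n}"
    proof (intro allI impI)
      fix i assume "a' i + b i \<noteq> 0"
      then have "a' i \<noteq> 0 \<or> b i \<noteq> 0" by simp
      then show "i \<in> {1..n}" using hA2[OF s(1)] hB2[OF s(3)] by blast
    qed
    have v2: "\<forall>i\<in>{1..n-r}. a' i + b i < d i"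
    proof
      fix i assume i: "i \<in> {1..n-r}"
      then have "b i = 0" by (rule hB[OF s(3)])
      moreover have "a' i < d i" using s(1) i by (auto simp: Box_def)
      ultimately show "a' i + b i < d i" by simp
    qed
    have "boxmon n m d r x"
      unfolding boxmon_def valid_mon_def x using v1 v2 s(2) by simp
    moreover have "mdeg delta n x = t"
      using s(4) vsum_split[of n a' b] by (simp add: x mdeg_def vsum_def)
    ultimately show "x \<in> {x. boxmon n m d r x \<and> mdeg delta n x = t}" by simp
  qed
  have inj: "inj_on ?phi (SIGMA p:?Q. ?F p)"
  proof (rule inj_onI)
    fix u v assume u: "u \<in> (SIGMA p:?Q. ?F p)" and v: "v \<in> (SIGMA p:?Q. ?F p)" and e: "?phi u = ?phi v"
    obtain a1 j1 b1 where u': "u = ((a1, j1), b1)" by (metis prod.collapse)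
    obtain a2 j2 b2 where v': "v = ((a2, j2), b2)" by (metis prod.collapse)
    have e1: "\<And>i. a1 i + b1 i = a2 i + b2 i" "j1 = j2" using e by (auto simp: u' v' fun_eq_iff)
    have m: "a1 \<in> Box n r d" "a2 \<in> Box n r d" "supp_in ?L b1" "supp_in ?L b2"
      using u v by (auto simp: u' v')
    have "a1 i = a2 i \<and> b1 i = b2 i" for i
    proof (cases "i \<in> {1..n-r}")
      case True
      then show ?thesis using hB[OF m(3) True] hB[OF m(4) True] e1(1)[of i] by simp
    next
      case False
      then show ?thesis using hA[OF m(1) False] hA[OF m(2) False] e1(1)[of i] by simp
    qed
    then have "a1 = a2" "b1 = b2" by (auto simp: fun_eq_iff)
    then show "u = v" using u' v' e1 by simp
  qed
  have "card {x. boxmon n m d r x \<and> mdeg delta n x = t} = card (SIGMA p:?Q. ?F p)"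
    unfolding eq by (rule card_image[OF inj])
  also have "\<dots> = (\<Sum>p\<in>?Q. card (?F p))"
    by (rule card_SigmaI) (use finite_Box finF in auto)
  also have "\<dots> = (\<Sum>p\<in>?Q. (if ?c p \<le> t then cnt n ?L (t - ?c p) else 0))"
  proof (rule sum.cong[OF refl])
    fix p show "card (?F p) = (if ?c p \<le> t then cnt n ?L (t - ?c p) else 0)"
      unfolding Fe[of p] cnt_def by simp
  qed
  finally show ?thesis .
qed


lemma macaulay_final:
  fixes P :: "((mon \<Rightarrow> 'k::field) \<times> nat set) set"
  assumes finP: "finite P" and ex: "q_exact n delta D P" and r1: "1 \<le> r"
    and cardS: "card {C\<in>P. r \<le> cdim C} = M" and M1: "M \<ge> 1"
  shows "macaulay_const n delta D P r = M + D"
proof -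
  define S where "S = {C\<in>P. r \<le> cdim C}"
  define E where "E = cdeg n delta ` S"
  have std1: "\<And>C. C \<in> P \<Longrightarrow> cdim C > 0 \<Longrightarrow> D \<le> cdeg n delta C"
    and std2: "\<And>C d. C \<in> P \<Longrightarrow> cdim C > 0 \<Longrightarrow> D \<le> d \<Longrightarrow> d \<le> cdeg n delta C \<Longrightarrow>
        \<exists>C'\<in>P. cdeg n delta C' = d \<and> cdim C' \<ge> cdim C"
    and exd: "\<And>C C'. C \<in> P \<Longrightarrow> C' \<in> P \<Longrightarrow> cdim C > 0 \<Longrightarrow> cdim C' > 0 \<Longrightarrow> C \<noteq> C' \<Longrightarrow>
        cdeg n delta C \<noteq> cdeg n delta C'"
    using ex unfolding q_exact_def q_standard_def by blast+
  have finS: "finite S" using finP by (simp add: S_def)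
  have inj: "inj_on (cdeg n delta) S"
    by (rule inj_onI) (use exd r1 in \<open>fastforce simp: S_def\<close>)
  have cE: "card E = M" unfolding E_def using card_image[OF inj] cardS by (simp add: S_def)
  have finE: "finite E" using finS by (simp add: E_def)
  have lowE: "\<And>e. e \<in> E \<Longrightarrow> D \<le> e" using std1 r1 by (fastforce simp: E_def S_def)
  have downE: "x \<in> E" if hyp: "e \<in> E" "D \<le> x" "x \<le> e" for e x
  proof -
    obtain C where C: "C \<in> P" "r \<le> cdim C" "e = cdeg n delta C" using hyp(1) unfolding E_def S_def by blast
    then obtain C' where "C' \<in> P" "cdeg n delta C' = x" "cdim C' \<ge> cdim C"
      using std2[of C x] hyp r1 by auto
    then show ?thesis using C by (auto simp: E_def S_def)
  qed
  have "E \<noteq> {}" using cE M1 by auto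
  define mx where "mx = Max E"
  have mxE: "mx \<in> E" using finE \<open>E \<noteq> {}\<close> by (simp add: mx_def)
  have Eeq: "E = {D..mx}"
  proof
    show "E \<subseteq> {D..mx}" using lowE finE by (auto simp: mx_def)
    show "{D..mx} \<subseteq> E" using downE[OF mxE] by auto
  qed
  have "card {D..mx} = M" using cE Eeq by simp
  then have mxv: "mx + 1 = M + D" using lowE[OF mxE] by simp
  have set: "{1 + cdeg n delta C | C. C \<in> P \<and> cdim C \<ge> r} = Suc ` E"
    by (auto simp: E_def S_def)
  show ?thesis unfolding macaulay_const_def set
  proof (rule Max_eqI)
    show "finite ({D} \<union> Suc ` E)" using finE by simp
    show "y \<le> M + D" if "y \<in> {D} \<union> Suc ` E" for y
      using that Eeq mxv by auto
    show "M + D \<in> {D} \<union> Suc ` E" using mxE mxv by force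
  qed
qed

lemma gz_nat: "gz n u (int k - int e) = (if e \<le> k then int (cnt n u (k - e)) else 0)"
  by (auto simp: gz_def nat_diff_distrib)

lemma int_identity:
  fixes P :: "((mon \<Rightarrow> 'k::field) \<times> nat set) set"
  assumes dec: "cone_decomp n m delta (N_JF n m d r) P" and rn: "r \<le> n"
  shows "(\<Sum>C\<in>P. gz n (snd C) (t - int (cdeg n delta C))) =
         (\<Sum>p\<in>Box n r d \<times> {1..m}. gz n {n-r+1..n} (t - int (vsum n (fst p) + delta (snd p))))"
proof (cases "t < 0")
  case True
  then show ?thesis by (simp add: gz_def)
next
  case False
  then obtain k where k: "t = int k" by (metis nonneg_int_cases not_less)
  have valid: "\<And>C. C \<in> P \<Longrightarrow> valid_cone n m delta C" using dec by (simp add: cone_decomp_def)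
  have "(\<Sum>C\<in>P. gz n (snd C) (t - int (cdeg n delta C))) = (\<Sum>C\<in>P. int (card (Bc n delta C k)))"
    unfolding k gz_nat by (rule sum.cong[OF refl]) (simp add: Bc_card(2)[OF valid])
  also have "\<dots> = int (\<Sum>C\<in>P. card (Bc n delta C k))" by simp
  also have "\<dots> = int (card {x. boxmon n m d r x \<and> mdeg delta n x = k})"
    using count_identity[OF dec] by simp
  also have "\<dots> = (\<Sum>p\<in>Box n r d \<times> {1..m}. gz n {n-r+1..n} (t - int (vsum n (fst p) + delta (snd p))))"
    unfolding N_decomp[OF rn] k gz_nat of_nat_sum by (rule sum.cong[OF refl]) simp
  finally show ?thesis .
qed


theorem corollary7p4:
  fixes n m r D :: nat and delta d :: "nat \<Rightarrow> nat"
    and P :: "((mon \<Rightarrow> 'k::field) \<times> nat set) set"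
  assumes "1 \<le> r" and "r \<le> n" and "1 \<le> m"
    and "\<forall>i\<in>{1..n-r}. 0 < d i"
    and "Max (delta ` {1..m}) \<le> D"
    and "cone_decomp n m delta (N_JF n m d r) P"
    and "q_exact n delta D P"
  shows "macaulay_const n delta D P r = (\<Prod>i=1..n-r. d i) * m + D"
proof -
  note dec = assms(6)
  have finP: "finite P" and valid: "\<And>C. C \<in> P \<Longrightarrow> valid_cone n m delta C"
    using dec by (auto simp: cone_decomp_def)
  let ?Q = "Box n r d \<times> {1..m}"
  let ?L = "{n-r+1..n}"
  define e :: "(mon \<Rightarrow> 'k) \<times> nat set \<Rightarrow> int" where "e = (\<lambda>C. int (cdeg n delta C))"
  define c where "c = (\<lambda>p. int (vsum n (fst p) + delta (snd p)))"
  define M where "M = (\<Prod>i=1..n-r. d i) * m"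
  define j where "j = r - 1"
  have cardQ: "card ?Q = M" by (simp add: card_cartesian_product card_Box M_def)
  have finQ: "finite ?Q" using finite_Box by simp
  have M1: "M \<ge> 1"
  proof -
    have "1 \<le> (\<Prod>i=1..n-r. d i)" using assms(4) by (simp add: Suc_le_eq prod_pos)
    then show ?thesis using assms(3) unfolding M_def by (metis mult_le_mono nat_mult_1)
  qed
  have id: "(\<lambda>t. \<Sum>C\<in>P. gz n (snd C) (t - e C)) = (\<lambda>t. \<Sum>p\<in>?Q. gz n ?L (t - c p))"
    by (rule ext) (simp add: e_def c_def int_identity[OF dec assms(2)])
  have id2: "(\<Sum>C\<in>P. (dlt ^^ j) (gz n (snd C)) (t - e C)) = (\<Sum>p\<in>?Q. (dlt ^^ j) (gz n ?L) (t - c p))" for t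
  proof -
    have "(dlt ^^ j) (\<lambda>t. \<Sum>C\<in>P. gz n (snd C) (t - e C)) = (dlt ^^ j) (\<lambda>t. \<Sum>p\<in>?Q. gz n ?L (t - c p))"
      using id by simp
    then have "(\<lambda>t. \<Sum>C\<in>P. (dlt ^^ j) (\<lambda>t. gz n (snd C) (t - e C)) t) = (\<lambda>t. \<Sum>p\<in>?Q. (dlt ^^ j) (\<lambda>t. gz n ?L (t - c p)) t)"
      by (simp only: dlt_sum)
    then show ?thesis by (simp add: dlt_shift fun_eq_iff)
  qed
  have Lsub: "?L \<subseteq> {1..n}" using assms(2) by auto
  have cardL: "card ?L = r" using assms(1,2) by simp
  have jle: "j \<le> card ?L" using cardL by (simp add: j_def)
  obtain L' where L0: "L' \<subseteq> ?L" "card L' = card ?L - j" "(dlt ^^ j) (gz n ?L) = gz n L'"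
    using dlt_pow_gz[OF Lsub jle] by blast
  have "card L' = 1" using L0(2) cardL assms(1) by (simp add: j_def)
  note L' = L0(1) this L0(3)
  define T0 where "T0 = (\<Sum>C\<in>P. e C) + (\<Sum>p\<in>?Q. c p) + int r"
  have e0: "e C \<ge> 0" for C by (simp add: e_def)
  have c0: "c p \<ge> 0" for p by (simp add: c_def)
  have eT: "e C + int r \<le> T0" if "C \<in> P" for C
  proof -
    have "e C \<le> (\<Sum>C\<in>P. e C)" by (rule member_le_sum) (use that finP e0 in auto)
    moreover have "0 \<le> (\<Sum>p\<in>?Q. c p)" by (rule sum_nonneg) (use c0 in auto)
    ultimately show ?thesis by (simp add: T0_def)
  qed
  have cT: "c p \<le> T0" if "p \<in> ?Q" for p
  proof -
    have "c p \<le> (\<Sum>p\<in>?Q. c p)" by (rule member_le_sum) (use that finQ c0 in auto)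
    moreover have "0 \<le> (\<Sum>C\<in>P. e C)" by (rule sum_nonneg) (use e0 in auto)
    ultimately show ?thesis by (simp add: T0_def)
  qed
  have rhs: "(\<Sum>p\<in>?Q. (dlt ^^ j) (gz n ?L) (t - c p)) = int M" if "t \<ge> T0" for t
  proof -
    have "(\<Sum>p\<in>?Q. (dlt ^^ j) (gz n ?L) (t - c p)) = (\<Sum>p\<in>?Q. 1)"
    proof (rule sum.cong[OF refl])
      fix p assume "p \<in> ?Q"
      then have "t - c p \<ge> 0" using cT that by fastforce
      then show "(dlt ^^ j) (gz n ?L) (t - c p) = 1"
        unfolding L'(3) using gz_one[OF _ L'(2)] L'(1) Lsub by blast
    qed
    then show ?thesis using cardQ by simp
  qed
  define val :: "(mon \<Rightarrow> 'k) \<times> nat set \<Rightarrow> int \<Rightarrow> int" where "val = (\<lambda>C t. (dlt ^^ j) (gz n (snd C)) (t - e C))"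
  have usub: "snd C \<subseteq> {1..n}" if "C \<in> P" for C using valid[OF that] by (simp add: valid_cone_def)
  have vsmall: "val C t = 0" if "C \<in> P" "cdim C < r" "t \<ge> T0" for C t
  proof -
    have "card (snd C) \<le> j" using that(2) by (simp add: cdim_def j_def)
    moreover have "t - e C > int j" using eT[OF that(1)] that(3) assms(1) by (simp add: j_def)
    ultimately show ?thesis unfolding val_def by (rule dlt_pow_small[OF usub[OF that(1)]])
  qed
  have veq: "val C t = 1" if hyp: "C \<in> P" "cdim C = r" "t \<ge> T0" for C t
  proof -
    obtain u' where u': "u' \<subseteq> snd C" "card u' = card (snd C) - j" "(dlt ^^ j) (gz n (snd C)) = gz n u'"
    proof -
      have "j \<le> card (snd C)" using hyp(2) by (simp add: cdim_def j_def)
      then show ?thesis using dlt_pow_gz[OF usub[OF hyp(1)], of j] that by blast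
    qed
    have "card u' = 1" using u'(2) hyp(2) assms(1) by (simp add: cdim_def j_def)
    moreover have "t - e C \<ge> 0" using eT[OF hyp(1)] hyp(3) by simp
    ultimately show ?thesis unfolding val_def u'(3)
      using gz_one u'(1) usub[OF hyp(1)] by blast
  qed
  have vbig: "val C t \<ge> t - e C + 1" if hyp: "C \<in> P" "cdim C > r" "t \<ge> T0" for C t
  proof -
    obtain u' where u': "u' \<subseteq> snd C" "card u' = card (snd C) - j" "(dlt ^^ j) (gz n (snd C)) = gz n u'"
    proof -
      have "j \<le> card (snd C)" using hyp(2) by (simp add: cdim_def j_def)
      then show ?thesis using dlt_pow_gz[OF usub[OF hyp(1)], of j] that by blast
    qed
    have "card u' \<ge> 2" using u'(2) hyp(2) assms(1) by (simp add: cdim_def j_def)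
    moreover have "t - e C \<ge> 0" using eT[OF hyp(1)] hyp(3) by simp
    ultimately show ?thesis unfolding val_def u'(3)
      using gz_two u'(1) usub[OF hyp(1)] by (meson order_trans)
  qed
  have vnn: "val C t \<ge> 0" if "C \<in> P" "t \<ge> T0" for C t
  proof -
    consider "cdim C < r" | "cdim C = r" | "cdim C > r" by linarith
    then show ?thesis
    proof cases
      case 1 then show ?thesis using vsmall that by simp
    next
      case 2 then show ?thesis using veq that by simp
    next
      case 3
      then have "val C t \<ge> t - e C + 1" using vbig that by blast
      moreover have "t - e C \<ge> 0" using eT[OF that(1)] that(2) by simp
      ultimately show ?thesis by simp
    qed
  qed
  have sumv: "(\<Sum>C\<in>P. val C t) = int M" if "t \<ge> T0" for t
    using id2[of t] rhs[OF that] by (simp add: val_def)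
  have nobig: "cdim C \<le> r" if "C \<in> P" for C
  proof (rule ccontr)
    assume "\<not> cdim C \<le> r"
    then have big: "cdim C > r" by simp
    define t where "t = T0 + int M"
    have tT: "t \<ge> T0" by (simp add: t_def)
    have "val C t \<le> (\<Sum>C\<in>P. val C t)"
      by (rule member_le_sum) (use that finP vnn[OF _ tT] in auto)
    also have "\<dots> = int M" by (rule sumv[OF tT])
    finally have "val C t \<le> int M" .
    moreover have "val C t \<ge> t - e C + 1" by (rule vbig[OF that big tT])
    moreover have "e C + int r \<le> T0" by (rule eT[OF that])
    ultimately show False by (simp add: t_def)
  qed
  have "(\<Sum>C\<in>P. val C T0) = (\<Sum>C\<in>P. if cdim C = r then 1 else 0)"
  proof (rule sum.cong[OF refl])
    fix C assume C: "C \<in> P"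
    show "val C T0 = (if cdim C = r then 1 else 0)"
      using nobig[OF C] vsmall[OF C _ order.refl] veq[OF C _ order.refl] by (cases "cdim C = r") auto
  qed
  also have "\<dots> = int (card {C\<in>P. cdim C = r})"
    using sum.inter_filter[OF finP, of "\<lambda>_. (1::int)" "\<lambda>C. cdim C = r", symmetric] by simp
  finally have "card {C\<in>P. cdim C = r} = M" using sumv[of T0] by simp
  moreover have "{C\<in>P. r \<le> cdim C} = {C\<in>P. cdim C = r}" using nobig by force
  ultimately have "card {C\<in>P. r \<le> cdim C} = M" by simp
  then have "macaulay_const n delta D P r = M + D"
    by (rule macaulay_final[OF finP assms(7) assms(1) _ M1])
  then show ?thesis by (simp add: M_def)
qed

end
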